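(* With $\mu_n=\{p/n:p\in\mathbb Z,\ |p/n|\le n\}$, $\Lambda_{\mathbb Q}=\{\mu_{m!}:m\in\mathbb N\}$, $I$ a fine ideal of $\mathfrak F(\mathcal P_{fin}(\mathbb Q),\mathbb R)$ containing $I_{0,\Lambda_{\mathbb Q}}$, and $J$ the canonical projection, put $\alpha=\mathfrak n(\mathbb N)=J(\lambda\mapsto|\lambda\cap\mathbb N|)$. Then $\mathfrak n(\mathbb Q^+)=\alpha^2$ and $\mathfrak n(\mathbb Q)=2\alpha^2+1$, and hence in the NAP-space produced by $(\mathbb Q,1,I)$, $P(\mathbb N)=\dfrac{\alpha}{2\alpha^2+1}$.
   Context: $\mathbb N=\{1,2,3,\dots\}$, $\mathbb Q^+=\{x\in\mathbb Q:x>0\}$. $\mathcal P_{fin}(\Omega)$ is the set of finite subsets of $\Omega$ and $\mathfrak F=\mathfrak F(\mathcal P_{fin}(\Omega),\mathbb R)$ the real algebra of functions $\mathcal P_{fin}(\Omega)\to\mathbb R$ with pointwise operations. For $\omega\in\Omega$, $\chi_\lambda(\omega)=1$ if $\omega\in\lambda$, else $0$. An ideal $I$ of $\mathfrak F$ is fine if it is maximal and $\lambda\mapsto 1-\chi_\lambda(\omega)$ lies in $I$ for every $\omega\in\Omega$. For $\Lambda\subseteq\mathcal P_{fin}(\Omega)$, $I_{0,\Lambda}=\{\varphi\in\mathfrak F:\varphi(\lambda)=0\text{ for all }\lambda\in\Lambda\}$. The NAP-space produced by $(\Omega,1,I)$ has $P(A)=J(\lambda\mapsto|A\cap\lambda|)/J(\lambda\mapsto|\lambda|)$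 with $J$ the canonical projection $\mathfrak F\to\mathfrak F/I$; the numerosity of $A\subseteq\Omega$ is $\mathfrak n(A)=J(\lambda\mapsto|A\cap\lambda|)$ (equivalently $P(A)/P(\{\omega\})$). *)

theory Defs
  imports "HOL-Algebra.Algebra" "HOL-Library.FSet" "HOL-Library.Function_Algebras"
begin

text \<open>The real algebra F(P_fin(Omega), R) of real functions on finite subsets of Omega,
  with pointwise operations, as a HOL-Algebra ring record.\<close>
definition FR :: "('a fset \<Rightarrow> real) ring" where
  "FR = \<lparr>carrier = UNIV, monoid.mult = (*), one = 1, ring.zero = 0, ring.add = (+)\<rparr>"

definition chi :: "'a fset \<Rightarrow> 'a \<Rightarrow> real" where
  "chi l w = (if w |\<in>| l then 1 else 0)"

definition fine_ideal :: "('a fset \<Rightarrow> real) set \<Rightarrow> bool" where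
  "fine_ideal I \<longleftrightarrow> maximalideal I FR \<and> (\<forall>w. (\<lambda>l. 1 - chi l w) \<in> I)"

definition I0 :: "'a fset set \<Rightarrow> ('a fset \<Rightarrow> real) set" where
  "I0 Lam = {phi. \<forall>l\<in>Lam. phi l = 0}"

definition Jproj :: "('a fset \<Rightarrow> real) set \<Rightarrow> ('a fset \<Rightarrow> real) \<Rightarrow> ('a fset \<Rightarrow> real) set" where
  "Jproj I f = I +>\<^bsub>FR\<^esub> f"

definition numerosity :: "('a fset \<Rightarrow> real) set \<Rightarrow> 'a set \<Rightarrow> ('a fset \<Rightarrow> real) set" where
  "numerosity I A = Jproj I (\<lambda>l. real (card (A \<inter> fset l)))"

text \<open>NAP-space probability produced by (Omega, 1, I) (Omega = UNIV of the type).\<close>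
definition nap_P :: "('a fset \<Rightarrow> real) set \<Rightarrow> 'a set \<Rightarrow> ('a fset \<Rightarrow> real) set" where
  "nap_P I A = Jproj I (\<lambda>l. real (card (A \<inter> fset l)))
       \<otimes>\<^bsub>FR Quot I\<^esub> inv\<^bsub>FR Quot I\<^esub> (Jproj I (\<lambda>l. real (fcard l)))"

definition mu :: "nat \<Rightarrow> rat fset" where
  "mu n = Abs_fset {q. \<exists>p::int. q = of_int p / of_nat n \<and> \<bar>of_int p / of_nat n\<bar> \<le> (of_nat n :: rat)}"

definition Lambda_Q :: "rat fset set" where
  "Lambda_Q = {mu (fact m) | m. m \<ge> 1}"

definition natsQ :: "rat set" where
  "natsQ = {of_nat n | n. n \<ge> 1}"

end

theory Submission
  imports Defs
begin

definition SS :: "nat \<Rightarrow> rat set" where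
 "SS N = {q. \<exists>p::int. q = of_int p / of_nat N \<and> \<bar>of_int p / of_nat N\<bar> \<le> (of_nat N :: rat)}"

lemma SS_img: assumes "N \<ge> 1" shows "SS N = (\<lambda>p. of_int p / of_nat N) ` {- ((int N)^2) .. (int N)^2}"
proof -
  have N: "(of_nat N::rat) > 0" using assms by simp
  have key: "\<bar>of_int p / of_nat N\<bar> \<le> (of_nat N :: rat) \<longleftrightarrow> p \<in> {- ((int N)^2) .. (int N)^2}" for p
  proof -
    have "\<bar>of_int p / of_nat N\<bar> \<le> (of_nat N :: rat) \<longleftrightarrow> \<bar>of_int p\<bar> \<le> (of_nat N :: rat) * of_nat N"
      using N by (simp add: pos_divide_le_eq)
    also have "\<dots> \<longleftrightarrow> \<bar>p\<bar> \<le> (int N)^2"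
    proof -
      have e: "(of_nat N::rat) * of_nat N = of_int ((int N)^2)" by (simp add: power2_eq_square)
      show ?thesis unfolding e of_int_abs[symmetric] of_int_le_iff ..
    qed
    also have "\<dots> \<longleftrightarrow> p \<in> {- ((int N)^2) .. (int N)^2}" by (simp add: abs_le_iff) linarith
    finally show ?thesis .
  qed
  show ?thesis unfolding SS_def
  proof (intro equalityI subsetI)
    fix q assume "q \<in> {q. \<exists>p::int. q = of_int p / of_nat N \<and> \<bar>of_int p / of_nat N\<bar> \<le> (of_nat N :: rat)}"
    then obtain p where "q = of_int p / of_nat N" "\<bar>of_int p / of_nat N\<bar> \<le> (of_nat N :: rat)" by blast
    thus "q \<in> (\<lambda>p. of_int p / of_nat N) ` {- ((int N)^2) .. (int N)^2}" using key by blast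
  next
    fix q assume "q \<in> (\<lambda>p. of_int p / of_nat N :: rat) ` {- ((int N)^2) .. (int N)^2}"
    then obtain p where "q = of_int p / of_nat N" "p \<in> {- ((int N)^2) .. (int N)^2}" by blast
    thus "q \<in> {q. \<exists>p::int. q = of_int p / of_nat N \<and> \<bar>of_int p / of_nat N\<bar> \<le> (of_nat N :: rat)}" using key by blast
  qed
qed

lemma inj_phi: assumes "N \<ge> 1" shows "inj (\<lambda>p::int. (of_int p / of_nat N :: rat))"
  using assms by (auto simp: inj_def)

lemma card_SS: assumes "N \<ge> 1" shows "card (SS N) = 2*N^2+1"
proof -
  have "card (SS N) = card {- ((int N)^2) .. (int N)^2}"
    unfolding SS_img[OF assms] by (rule card_image) (metis inj_phi[OF assms] inj_on_subset subset_UNIV)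
  also have "\<dots> = 2*N^2+1" by (simp add: nat_add_distrib nat_mult_distrib nat_power_eq)
  finally show ?thesis .
qed

lemma pos_SS: assumes "N \<ge> 1" shows "card ({q. q > 0} \<inter> SS N) = N^2"
proof -
  have N: "(of_nat N::rat) > 0" using assms by simp
  have "{q. q > 0} \<inter> SS N = (\<lambda>p. of_int p / of_nat N) ` {1 .. (int N)^2}"
    unfolding SS_img[OF assms] using N by (auto simp: divide_pos_pos zero_less_divide_iff)
  hence "card ({q. q > 0} \<inter> SS N) = card {1 .. (int N)^2}"
    by (metis card_image inj_phi[OF assms] inj_on_subset subset_UNIV)
  thus ?thesis by (simp add: nat_power_eq)
qed

lemma nat_SS: assumes "N \<ge> 1" shows "card (natsQ \<inter> SS N) = N"
proof -
  have N: "(of_nat N::rat) > 0" using assms by simp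
  have "natsQ \<inter> SS N = of_nat ` {1..N}"
  proof (intro equalityI subsetI)
    fix q assume q0: "q \<in> natsQ \<inter> SS N"
    from q0 obtain n where qn: "q = of_nat n" "n \<ge> 1" unfolding natsQ_def by blast
    from q0 obtain p where qp: "q = of_int p / of_nat N" "\<bar>of_int p / of_nat N\<bar> \<le> (of_nat N :: rat)"
      unfolding SS_def by blast
    have "(of_nat n :: rat) \<le> of_nat N" using qn qp by simp
    hence "n \<le> N" by simp
    thus "q \<in> of_nat ` {1..N}" using qn by auto
  next
    fix q assume "q \<in> (of_nat ` {1..N} :: rat set)"
    then obtain n where n: "q = of_nat n" "1 \<le> n" "n \<le> N" by auto
    have "q = of_int (int n * int N) / of_nat N" using N n by simp
    moreover have "\<bar>of_int (int n * int N) / of_nat N\<bar> \<le> (of_nat N :: rat)" using N n by simp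
    ultimately show "q \<in> natsQ \<inter> SS N" unfolding natsQ_def SS_def using n by blast
  qed
  thus ?thesis by (simp add: card_image inj_on_def)
qed


lemma fset_mu: assumes "N \<ge> 1" shows "fset (mu N) = SS N"
proof -
  have "finite (SS N)" unfolding SS_img[OF assms] by simp
  thus ?thesis unfolding mu_def SS_def[symmetric] by (simp add: Abs_fset_inverse)
qed

lemma Lam_fset: assumes "l \<in> Lambda_Q" shows "\<exists>N\<ge>1. fset l = SS N"
proof -
  from assms obtain m where "l = mu (fact m)" unfolding Lambda_Q_def by blast
  moreover have "(fact m :: nat) \<ge> 1" by (simp add: Suc_leI)
  ultimately show ?thesis using fset_mu by blast
qed

lemma cring_FR: "cring (FR :: ('a fset \<Rightarrow> real) ring)"
proof -
  have "\<exists>y. x + y = 0" for x :: "'a fset \<Rightarrow> real"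
    using add.right_inverse by blast
  thus ?thesis
    unfolding FR_def using add.right_inverse
    by unfold_locales (auto simp:algebra_simps Units_def)
qed

theorem mainTheorem16:
  fixes I :: "(rat fset \<Rightarrow> real) set"
  assumes "fine_ideal I"
    and "I0 Lambda_Q \<subseteq> I"
  shows "numerosity I {q. q > 0} = numerosity I natsQ \<otimes>\<^bsub>FR Quot I\<^esub> numerosity I natsQ
    \<and> numerosity I UNIV = (numerosity I natsQ \<otimes>\<^bsub>FR Quot I\<^esub> numerosity I natsQ)
          \<oplus>\<^bsub>FR Quot I\<^esub> (numerosity I natsQ \<otimes>\<^bsub>FR Quot I\<^esub> numerosity I natsQ)
          \<oplus>\<^bsub>FR Quot I\<^esub> \<one>\<^bsub>FR Quot I\<^esub>
    \<and> nap_P I natsQ = numerosity I natsQ \<otimes>\<^bsub>FR Quot I\<^esub>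
          inv\<^bsub>FR Quot I\<^esub> ((numerosity I natsQ \<otimes>\<^bsub>FR Quot I\<^esub> numerosity I natsQ)
          \<oplus>\<^bsub>FR Quot I\<^esub> (numerosity I natsQ \<otimes>\<^bsub>FR Quot I\<^esub> numerosity I natsQ)
          \<oplus>\<^bsub>FR Quot I\<^esub> \<one>\<^bsub>FR Quot I\<^esub>)"
proof -
  have rFR: "ring (FR :: (rat fset \<Rightarrow> real) ring)" using cring_FR cring.axioms(1) by blast
  have idl: "ideal I FR" using assms(1) unfolding fine_ideal_def using maximalideal.axioms(1) by blast
  have hom: "(\<lambda>f. I +>\<^bsub>FR\<^esub> f) \<in> ring_hom FR (FR Quot I)" using ideal.rcos_ring_hom[OF idl] .
  have rQ: "ring (FR Quot I)" using ideal.quotient_is_ring[OF idl] .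
  interpret Q: ring "FR Quot I" by (rule rQ)
  have cF: "carrier FR = UNIV" by (simp add: FR_def)
  have Jmul: "Jproj I (f * g) = Jproj I f \<otimes>\<^bsub>FR Quot I\<^esub> Jproj I g" for f g
    using ring_hom_mult[OF hom, of f g] unfolding Jproj_def by (simp add: FR_def)
  have Jadd: "Jproj I (f + g) = Jproj I f \<oplus>\<^bsub>FR Quot I\<^esub> Jproj I g" for f g
    using ring_hom_add[OF hom, of f g] unfolding Jproj_def by (simp add: FR_def)
  have Jone: "Jproj I 1 = \<one>\<^bsub>FR Quot I\<^esub>"
    using ring_hom_one[OF hom] unfolding Jproj_def by (simp add: FR_def)
  have Jeq: "Jproj I f = Jproj I g" if "\<forall>l\<in>Lambda_Q. f l = g l" for f g
  proof -
    have "f - g \<in> I" using that assms(2) unfolding I0_def by auto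
    hence z: "Jproj I (f - g) = \<zero>\<^bsub>FR Quot I\<^esub>"
      unfolding Jproj_def using ring.a_rcos_zero[OF rFR idl] by (simp add: FactRing_def)
    have cg: "Jproj I g \<in> carrier (FR Quot I)"
      unfolding Jproj_def using ring_hom_closed[OF hom] cF by auto
    have "Jproj I f = Jproj I (g + (f - g))" by simp
    also have "\<dots> = Jproj I g \<oplus>\<^bsub>FR Quot I\<^esub> Jproj I (f - g)" by (rule Jadd)
    also have "\<dots> = Jproj I g" using z Q.r_zero[OF cg] by simp
    finally show ?thesis .
  qed
  define a where "a = (\<lambda>l::rat fset. real (card (natsQ \<inter> fset l)))"
  have na: "numerosity I natsQ = Jproj I a" unfolding numerosity_def a_def ..
  have pw1: "\<forall>l\<in>Lambda_Q. (\<lambda>l. real (card ({q. q > 0} \<inter> fset l))) l = (a * a) l"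
  proof
    fix l assume "l \<in> Lambda_Q"
    then obtain N where "N \<ge> 1" "fset l = SS N" using Lam_fset by blast
    thus "(\<lambda>l. real (card ({q. q > 0} \<inter> fset l))) l = (a * a) l"
      unfolding a_def using pos_SS nat_SS by (simp add: power2_eq_square)
  qed
  have pw2: "\<forall>l\<in>Lambda_Q. (\<lambda>l. real (card (UNIV \<inter> fset l))) l = (a * a + a * a + 1) l"
  proof
    fix l assume "l \<in> Lambda_Q"
    then obtain N where "N \<ge> 1" "fset l = SS N" using Lam_fset by blast
    thus "(\<lambda>l. real (card (UNIV \<inter> fset l))) l = (a * a + a * a + 1) l"
      unfolding a_def using card_SS nat_SS by (simp add: power2_eq_square)
  qed
  have c1: "numerosity I {q. q > 0} = numerosity I natsQ \<otimes>\<^bsub>FR Quot I\<^esub> numerosity I natsQ"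
  proof -
    have "numerosity I {q. q > 0} = Jproj I (a * a)" unfolding numerosity_def by (rule Jeq[OF pw1])
    thus ?thesis unfolding na Jmul .
  qed
  have c2: "numerosity I UNIV = (numerosity I natsQ \<otimes>\<^bsub>FR Quot I\<^esub> numerosity I natsQ)
          \<oplus>\<^bsub>FR Quot I\<^esub> (numerosity I natsQ \<otimes>\<^bsub>FR Quot I\<^esub> numerosity I natsQ)
          \<oplus>\<^bsub>FR Quot I\<^esub> \<one>\<^bsub>FR Quot I\<^esub>"
  proof -
    have "numerosity I UNIV = Jproj I (a * a + a * a + 1)" unfolding numerosity_def by (rule Jeq[OF pw2])
    thus ?thesis unfolding na Jmul Jadd Jone .
  qed
  have fc: "(\<lambda>l. real (fcard l)) = (\<lambda>l::rat fset. real (card (UNIV \<inter> fset l)))"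
    by (simp add: fcard.rep_eq)
  have c3: "nap_P I natsQ = numerosity I natsQ \<otimes>\<^bsub>FR Quot I\<^esub> inv\<^bsub>FR Quot I\<^esub> (numerosity I UNIV)"
    unfolding nap_P_def numerosity_def fc ..
  show ?thesis using c1 c2 c3 by simp
qed

end
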